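(* Let $n\ge 4$ and let $G$ be the complete sun graph on $2n$ vertices. Then for every integer $r\ge 3$, the $r$-th power of $G$ satisfies $\varphi(G^r)=(n-1)(2n-1)$.
   Context: All graphs are finite, simple and without isolated vertices. $\mathbb{N}_0$ denotes the set of non-negative integers; for finite $A,B\subseteq\mathbb{N}_0$, $A+B=\{a+b: a\in A, b\in B\}$. An integer additive set-indexer (IASI) of a graph $G$ is an injective map $f$ from $V(G)$ to the finite non-empty subsets of $\mathbb{N}_0$ such that the induced edge map $f^+(uv)=f(u)+f(v)$ is injective on $E(G)$. A weak IASI (WIASI) is an IASI $f$ with $|f^+(uv)|=\max(|f(u)|,|f(v)|)$ for every edge $uv$ (equivalently, for every edge at least one end vertex has a singleton label). A vertex or edge is mono-indexed if its set-label has cardinality $1$. Every graph admits a WIASI. The sparing number $\varphi(G)$ is the minimum, over all WIASIs of $G$, of the number of mono-indexed edges of $G$. The $r$-th power $G^r$ has vertex set $V(G)$, two distinct vertices being adjacent iff their distance in $G$ is at most $r$. The complete sun graph on $2n$ vertices ($n\ge 3$) has vertex set $U\cup W$ with $U=\{u_1,\dots,u_n\}$, $W=\{w_1,\dots,w_n\}$, where $U$ induces a complete graph, $W$ is an independent set, and $w_j$ is adjacent to $u_i$ if and only if $j=i$ or $j\equiv i+1 \pmod n$. *)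

theory Defs
  imports Main
begin

text \<open>A simple graph is given by a vertex set V and a set E of 2-element subsets of V.\<close>

definition sumset :: "nat set \<Rightarrow> nat set \<Rightarrow> nat set" where
  "sumset A B = {a + b | a b. a \<in> A \<and> b \<in> B}"

text \<open>Integer additive set-indexer: injective labelling of vertices by finite nonempty
  subsets of the naturals, whose induced edge map uv \<mapsto> f u + f v is injective on E.\<close>
definition iasi :: "'a set \<Rightarrow> 'a set set \<Rightarrow> ('a \<Rightarrow> nat set) \<Rightarrow> bool" where
  "iasi V E f \<longleftrightarrow>
     (\<forall>v\<in>V. finite (f v) \<and> f v \<noteq> {}) \<and> inj_on f V \<and>
     (\<forall>u v x y. {u, v} \<in> E \<longrightarrow> {x, y} \<in> E \<longrightarrow>
        sumset (f u) (f v) = sumset (f x) (f y) \<longrightarrow> {u, v} = {x, y})"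

definition wiasi :: "'a set \<Rightarrow> 'a set set \<Rightarrow> ('a \<Rightarrow> nat set) \<Rightarrow> bool" where
  "wiasi V E f \<longleftrightarrow> iasi V E f \<and>
     (\<forall>u v. {u, v} \<in> E \<longrightarrow> u \<noteq> v \<longrightarrow>
        card (sumset (f u) (f v)) = max (card (f u)) (card (f v)))"

definition mono_edges :: "'a set set \<Rightarrow> ('a \<Rightarrow> nat set) \<Rightarrow> 'a set set" where
  "mono_edges E f = {e \<in> E. \<exists>u v. e = {u, v} \<and> u \<noteq> v \<and> card (sumset (f u) (f v)) = 1}"

definition sparing_number :: "'a set \<Rightarrow> 'a set set \<Rightarrow> nat" where
  "sparing_number V E = (LEAST k. \<exists>f. wiasi V E f \<and> k = card (mono_edges E f))"

text \<open>Walks given as vertex lists; distance at most r means a walk with at most r edges.\<close>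
definition within_dist :: "'a set set \<Rightarrow> nat \<Rightarrow> 'a \<Rightarrow> 'a \<Rightarrow> bool" where
  "within_dist E r u v \<longleftrightarrow> (\<exists>xs. xs \<noteq> [] \<and> hd xs = u \<and> last xs = v \<and>
      length xs \<le> r + 1 \<and> (\<forall>i < length xs - 1. {xs ! i, xs ! Suc i} \<in> E))"

definition graph_power :: "'a set \<Rightarrow> 'a set set \<Rightarrow> nat \<Rightarrow> 'a set set" where
  "graph_power V E r = {{u, v} | u v. u \<in> V \<and> v \<in> V \<and> u \<noteq> v \<and> within_dist E r u v}"

text \<open>Complete sun graph on 2n vertices: u_i = Inl i, w_j = Inr j, indices 0..n-1;
  w_j adjacent to u_i iff j = i or j = (i+1) mod n.\<close>
definition sun_V :: "nat \<Rightarrow> (nat + nat) set" where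
  "sun_V n = Inl ` {..<n} \<union> Inr ` {..<n}"

definition sun_E :: "nat \<Rightarrow> (nat + nat) set set" where
  "sun_E n = {{Inl i, Inl k} | i k. i < n \<and> k < n \<and> i \<noteq> k}
           \<union> {{Inl i, Inr j} | i j. i < n \<and> j < n \<and> (j = i \<or> j = (i + 1) mod n)}"

end

theory Submission
  imports Defs
begin

definition K :: "'a set \<Rightarrow> 'a set set" where
  "K V = {{u, v} | u v. u \<in> V \<and> v \<in> V \<and> u \<noteq> v}"

lemma K_mem: "{u,v} \<in> K V \<longleftrightarrow> u\<in>V \<and> v\<in>V \<and> u\<noteq>v"
  unfolding K_def by (auto simp: doubleton_eq_iff)

lemma K_Pow: "K V \<subseteq> Pow V"
  unfolding K_def by auto

lemma sumset_finite: "finite A \<Longrightarrow> finite B \<Longrightarrow> finite (sumset A B)"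
proof -
  assume "finite A" "finite B"
  have "sumset A B = (\<lambda>(a,b). a+b) ` (A\<times>B)" unfolding sumset_def by auto
  thus ?thesis using \<open>finite A\<close> \<open>finite B\<close> by simp
qed

lemma sumset_comm: "sumset A B = sumset B A"
  unfolding sumset_def by (force simp: add.commute)

lemma sumset_single: "sumset {a} {b} = {a+b}"
  unfolding sumset_def by auto

lemma sumset_ins: "sumset {0, a} {b} = {b, a+b}"
  unfolding sumset_def by auto

lemma sumset_Max:
  assumes "finite A" "A \<noteq> {}" "finite B" "B \<noteq> {}"
  shows "Max (sumset A B) = Max A + Max B"
proof (rule Max_eqI)
  show "finite (sumset A B)" using assms sumset_finite by blast
  fix y assume "y \<in> sumset A B"
  then obtain a b where "y = a + b" "a \<in> A" "b \<in> B" unfolding sumset_def by blast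
  moreover have "a \<le> Max A" using \<open>a \<in> A\<close> assms(1) by simp
  moreover have "b \<le> Max B" using \<open>b \<in> B\<close> assms(3) by simp
  ultimately show "y \<le> Max A + Max B" by simp
next
  show "Max A + Max B \<in> sumset A B"
    using assms Max_in[of A] Max_in[of B] unfolding sumset_def by blast
qed

lemma sumset_card_gt:
  assumes "finite A" "finite B" "card A \<ge> 2" "card B \<ge> 2"
  shows "card A < card (sumset A B)"
proof -
  have ne: "A \<noteq> {}" "B \<noteq> {}" using assms by auto
  have "Min B < Max B"
  proof (rule ccontr)
    assume "\<not> Min B < Max B"
    have "B \<subseteq> {Min B}"
    proof
      fix b assume "b \<in> B"
      hence "Min B \<le> b" "b \<le> Max B" using assms(2) by simp_all
      thus "b \<in> {Min B}" using \<open>\<not> Min B < Max B\<close> by simp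
    qed
    hence "card B \<le> card {Min B}" by (rule card_mono[rotated]) simp
    hence "card B \<le> 1" by simp
    thus False using assms by simp
  qed
  define T where "T = (\<lambda>a. a + Min B) ` A"
  have cT: "card T = card A" unfolding T_def by (simp add: card_image inj_on_def)
  have nT: "Max A + Max B \<notin> T"
  proof
    assume "Max A + Max B \<in> T"
    then obtain a where "a \<in> A" "Max A + Max B = a + Min B" unfolding T_def by auto
    moreover have "a \<le> Max A" using \<open>a \<in> A\<close> assms by simp
    ultimately show False using \<open>Min B < Max B\<close> by linarith
  qed
  have mA: "Max A \<in> A" and mB: "Max B \<in> B" and nB: "Min B \<in> B"
    using assms ne by simp_all
  have sub: "insert (Max A + Max B) T \<subseteq> sumset A B"
  proof
    fix x assume "x \<in> insert (Max A + Max B) T"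
    hence "x = Max A + Max B \<or> (\<exists>a\<in>A. x = a + Min B)" unfolding T_def by blast
    thus "x \<in> sumset A B" unfolding sumset_def using mA mB nB by blast
  qed
  have "card (insert (Max A + Max B) T) = card A + 1"
    using nT cT assms unfolding T_def by simp
  moreover have "card (insert (Max A + Max B) T) \<le> card (sumset A B)"
    using sub sumset_finite assms card_mono by blast
  ultimately show ?thesis by simp
qed

lemma pow2_pair_ord:
  assumes "a < b" "c < d" "(2::nat)^a + 2^b = 2^c + 2^d"
  shows "a = c \<and> b = d"
proof -
  have "b \<le> d"
  proof (rule ccontr)
    assume "\<not> b \<le> d"
    hence "Suc d \<le> b" by simp
    have "(2::nat)^c < 2^d" using assms by simp
    hence "(2::nat)^c + 2^d < 2^Suc d" by simp
    also have "\<dots> \<le> 2^b" using \<open>Suc d \<le> b\<close> by (intro power_increasing) simp_all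
    finally show False using assms by simp
  qed
  moreover have "d \<le> b"
  proof (rule ccontr)
    assume "\<not> d \<le> b"
    hence "Suc b \<le> d" by simp
    have "(2::nat)^a < 2^b" using assms by simp
    hence "(2::nat)^a + 2^b < 2^Suc b" by simp
    also have "\<dots> \<le> 2^d" using \<open>Suc b \<le> d\<close> by (intro power_increasing) simp_all
    finally show False using assms by simp
  qed
  ultimately have "b = d" by simp
  with assms have "(2::nat)^a = 2^c" by simp
  thus ?thesis using \<open>b = d\<close> by simp
qed

lemma pow2_pair:
  assumes "a \<noteq> b" "c \<noteq> d" "(2::nat)^a + 2^b = 2^c + 2^d"
  shows "{a,b} = {c,d}"
proof -
  have s1: "(2::nat)^b + 2^a = 2^c + 2^d" "(2::nat)^a + 2^b = 2^d + 2^c"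
     "(2::nat)^b + 2^a = 2^d + 2^c" using assms by simp_all
  show ?thesis
  proof (cases "a < b")
    case True
    show ?thesis
    proof (cases "c < d")
      case True thus ?thesis using pow2_pair_ord[OF \<open>a<b\<close> True assms(3)] by auto
    next
      case False hence "d < c" using assms by simp
      thus ?thesis using pow2_pair_ord[OF \<open>a<b\<close> _ s1(2)] by auto
    qed
  next
    case False hence ba: "b < a" using assms by simp
    show ?thesis
    proof (cases "c < d")
      case True thus ?thesis using pow2_pair_ord[OF ba True s1(1)] by auto
    next
      case False hence "d < c" using assms by simp
      thus ?thesis using pow2_pair_ord[OF ba _ s1(3)] by auto
    qed
  qed
qed

lemma two_subsets_K: "{A. A \<subseteq> W \<and> card A = 2} = K W"
  unfolding K_def by (auto simp: card_2_iff)

lemma complete_sparing: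
  assumes fin: "finite V" and cV: "card V \<ge> 1"
  shows "sparing_number V (K V) = (card V - 1) choose 2"
proof -
  obtain idx :: "'a \<Rightarrow> nat" and N where "idx ` V = {i. i<N}" and inj: "inj_on idx V"
    using finite_imp_inj_to_nat_seg[OF fin] by blast
  obtain s where sV: "s \<in> V" using cV by fastforce
  define h where "h v = (2::nat)^(idx v)" for v
  define f where "f v = (if v = s then {0, h v} else {h v})" for v
  have hpos: "h v > 0" for v unfolding h_def by simp
  have finf: "finite (f v)" "f v \<noteq> {}" for v unfolding f_def by auto
  have Maxf: "Max (f v) = h v" for v unfolding f_def using hpos by auto
  have cardf: "card (f v) = (if v = s then 2 else 1)" for v
    unfolding f_def using hpos by (auto intro: Nat.gr0_implies_Suc)
  have sum_card: "card (sumset (f u) (f v)) = (if u = s \<or> v = s then 2 else 1)"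
    if "u \<noteq> v" for u v
  proof (cases "u = s")
    case True
    hence "sumset (f u) (f v) = {h v, h u + h v}" using that unfolding f_def
      by (simp add: sumset_ins)
    thus ?thesis using True hpos[of u] by simp
  next
    case False
    show ?thesis
    proof (cases "v = s")
      case True
      hence "sumset (f u) (f v) = {h u, h v + h u}" using that False unfolding f_def
        by (simp add: sumset_ins sumset_comm[of "{h u}"])
      thus ?thesis using True hpos[of v] by simp
    next
      case F2: False
      thus ?thesis using False unfolding f_def by (simp add: sumset_single)
    qed
  qed
  have Maxsum: "Max (sumset (f u) (f v)) = h u + h v" for u v
    using sumset_Max[OF finf(1) finf(2) finf(1) finf(2)] Maxf by simp
  have idx_inj: "u \<in> V \<Longrightarrow> v \<in> V \<Longrightarrow> idx u = idx v \<Longrightarrow> u = v" for u v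
    using inj inj_onD by metis
  have w: "wiasi V (K V) f"
    unfolding wiasi_def iasi_def
  proof (intro conjI allI impI ballI)
    show "finite (f v)" "f v \<noteq> {}" for v using finf by auto
    show "inj_on f V"
    proof (rule inj_onI)
      fix u v assume "u \<in> V" "v \<in> V" "f u = f v"
      hence "h u = h v" using Maxf by metis
      hence "idx u = idx v" unfolding h_def by simp
      thus "u = v" using idx_inj \<open>u \<in> V\<close> \<open>v \<in> V\<close> by blast
    qed
    fix u v
    assume uv: "{u, v} \<in> K V"
    hence uvV: "u \<in> V" "v \<in> V" "u \<noteq> v" using K_mem by metis+
    show "card (sumset (f u) (f v)) = max (card (f u)) (card (f v))"
      using sum_card[OF uvV(3)] cardf[of u] cardf[of v] uvV(3) by auto
    fix x y
    assume xy: "{x, y} \<in> K V" and eq: "sumset (f u) (f v) = sumset (f x) (f y)"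
    hence xyV: "x \<in> V" "y \<in> V" "x \<noteq> y" using K_mem by metis+
    have "h u + h v = h x + h y" using eq Maxsum by metis
    hence e2: "(2::nat)^idx u + 2^idx v = 2^idx x + 2^idx y" unfolding h_def .
    have "idx u \<noteq> idx v" using idx_inj uvV by blast
    moreover have "idx x \<noteq> idx y" using idx_inj xyV by blast
    ultimately have "{idx u, idx v} = {idx x, idx y}" using pow2_pair e2 by blast
    thus "{u, v} = {x, y}" using idx_inj uvV xyV
      by (auto simp: doubleton_eq_iff)
  qed
  have mono_eq: "mono_edges (K V) f = {A. A \<subseteq> V - {s} \<and> card A = 2}"
  proof
    show "mono_edges (K V) f \<subseteq> {A. A \<subseteq> V - {s} \<and> card A = 2}"
    proof
      fix e assume "e \<in> mono_edges (K V) f"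
      then obtain u v where e: "e \<in> K V" "e = {u,v}" "u \<noteq> v"
        "card (sumset (f u) (f v)) = 1" unfolding mono_edges_def by blast
      have "u \<in> V" "v \<in> V" using e(1) unfolding e(2) K_mem by auto
      moreover have "\<not> (u = s \<or> v = s)"
      proof
        assume "u = s \<or> v = s"
        hence "card (sumset (f u) (f v)) = 2" using sum_card[OF e(3)] by simp
        thus False using e(4) by simp
      qed
      moreover have "card {u,v} = 2" using e(3) by simp
      ultimately show "e \<in> {A. A \<subseteq> V - {s} \<and> card A = 2}" unfolding e(2) by blast
    qed
    show "{A. A \<subseteq> V - {s} \<and> card A = 2} \<subseteq> mono_edges (K V) f"
    proof
      fix A assume "A \<in> {A. A \<subseteq> V - {s} \<and> card A = 2}"
      then obtain x y where A: "A = {x,y}" "x \<noteq> y" "x \<in> V" "y \<in> V" "x \<noteq> s" "y \<noteq> s"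
        by (auto simp: card_2_iff)
      have c1: "card (sumset (f x) (f y)) = 1" using sum_card[OF A(2)] A(5,6) by simp
      have "{x,y} \<in> K V" using A(2,3,4) by (simp add: K_mem)
      moreover have "\<exists>u v. {x,y} = {u,v} \<and> u \<noteq> v \<and> card (sumset (f u) (f v)) = 1"
        using A(2) c1 by (intro exI[of _ x] exI[of _ y]) simp
      ultimately show "A \<in> mono_edges (K V) f"
        unfolding mono_edges_def A(1) by (rule CollectI[of "\<lambda>e. e \<in> K V \<and> _ e", OF conjI])
    qed
  qed
  have cm: "card (mono_edges (K V) f) = (card V - 1) choose 2"
    unfolding mono_eq using n_subsets[of "V - {s}" 2] fin sV by simp
  have lower: "(card V - 1) choose 2 \<le> card (mono_edges (K V) g)"
    if wg: "wiasi V (K V) g" for g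
  proof -
    define S where "S = {v\<in>V. card (g v) = 1}"
    have ig: "iasi V (K V) g" using wg unfolding wiasi_def by (rule conjunct1)
    have gall: "\<forall>v\<in>V. finite (g v) \<and> g v \<noteq> {}" using ig unfolding iasi_def by (rule conjunct1)
    have gfin: "finite (g v)" "g v \<noteq> {}" if "v \<in> V" for v
      using gall that by simp_all
    have one: "\<forall>a\<in>V - S. \<forall>b\<in>V - S. a = b"
    proof (intro ballI, rule ccontr)
      fix a b assume a: "a \<in> V - S" and b: "b \<in> V - S" and ab: "a \<noteq> b"
      have "{a,b} \<in> K V" using a b ab by (simp add: K_mem)
      hence eqm: "card (sumset (g a) (g b)) = max (card (g a)) (card (g b))"
        using wg ab unfolding wiasi_def by blast
      have ca: "card (g a) \<ge> 2"
      proof -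
        have "card (g a) \<noteq> 0" using gfin[of a] a by auto
        moreover have "card (g a) \<noteq> 1" using a unfolding S_def by auto
        ultimately show ?thesis by linarith
      qed
      have cb: "card (g b) \<ge> 2"
      proof -
        have "card (g b) \<noteq> 0" using gfin[of b] b by auto
        moreover have "card (g b) \<noteq> 1" using b unfolding S_def by auto
        ultimately show ?thesis by linarith
      qed
      have aV: "a \<in> V" and bV: "b \<in> V" using a b by auto
      have "card (g a) < card (sumset (g a) (g b))"
        by (rule sumset_card_gt[OF gfin(1)[OF aV] gfin(1)[OF bV] ca cb])
      moreover have "card (g b) < card (sumset (g b) (g a))"
        by (rule sumset_card_gt[OF gfin(1)[OF bV] gfin(1)[OF aV] cb ca])
      moreover have "sumset (g b) (g a) = sumset (g a) (g b)" by (rule sumset_comm)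
      ultimately show False using eqm by (simp add: max_def split: if_splits)
    qed
    have "finite (V - S)" using fin by simp
    hence "card (V - S) \<le> 1" using one card_le_Suc0_iff_eq[of "V - S"] by simp
    moreover have SV: "S \<subseteq> V" unfolding S_def by blast
    moreover have "finite S" using fin SV finite_subset by blast
    moreover have "card (V - S) = card V - card S"
      by (rule card_Diff_subset[OF \<open>finite S\<close> SV])
    moreover have "card S \<le> card V" by (rule card_mono[OF fin SV])
    ultimately have cS: "card V - 1 \<le> card S" by linarith
    have sub: "{A. A \<subseteq> S \<and> card A = 2} \<subseteq> mono_edges (K V) g"
    proof
      fix A assume "A \<in> {A. A \<subseteq> S \<and> card A = 2}"
      then obtain x y where A: "A = {x,y}" "x \<noteq> y" "x \<in> S" "y \<in> S"
        by (auto simp: card_2_iff)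
      hence "card (g x) = 1" "card (g y) = 1" "x \<in> V" "y \<in> V" unfolding S_def by auto
      note xy = this
      obtain a where ga: "g x = {a}" using xy(1) by (rule card_1_singletonE)
      obtain b where gb: "g y = {b}" using xy(2) by (rule card_1_singletonE)
      have c1: "card (sumset (g x) (g y)) = 1" unfolding ga gb by (simp add: sumset_single)
      have "{x,y} \<in> K V" using xy(3,4) A(2) by (simp add: K_mem)
      moreover have "\<exists>u v. {x,y} = {u,v} \<and> u \<noteq> v \<and> card (sumset (g u) (g v)) = 1"
        using A(2) c1 by (intro exI[of _ x] exI[of _ y]) simp
      ultimately show "A \<in> mono_edges (K V) g"
        unfolding mono_edges_def A(1) by (rule CollectI[of "\<lambda>e. e \<in> K V \<and> _ e", OF conjI])
    qed
    have finM: "finite (mono_edges (K V) g)"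
    proof -
      have "finite (K V)" by (rule finite_subset[OF K_Pow]) (simp add: fin)
      moreover have "mono_edges (K V) g \<subseteq> K V" unfolding mono_edges_def by (rule Collect_subset)
      ultimately show ?thesis by (rule finite_subset[rotated])
    qed
    have finS: "finite S" using fin unfolding S_def by simp
    have "card S choose 2 \<le> card (mono_edges (K V) g)"
      using card_mono[OF finM sub] n_subsets[OF finS, of 2] by simp
    moreover have "(card V - 1) choose 2 \<le> card S choose 2"
      using cS binomial_right_mono by blast
    ultimately show ?thesis by linarith
  qed
  show ?thesis
    unfolding sparing_number_def
  proof (rule Least_equality)
    show "\<exists>f. wiasi V (K V) f \<and> (card V - 1) choose 2 = card (mono_edges (K V) f)"
      using w cm by metis
    show "\<And>y. \<exists>f. wiasi V (K V) f \<and> y = card (mono_edges (K V) f) \<Longrightarrow> (card V - 1) choose 2 \<le> y"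
      using lower by blast
  qed
qed



lemma wd2: "{a,b} \<in> E \<Longrightarrow> 1 \<le> r \<Longrightarrow> within_dist E r a b"
  unfolding within_dist_def by (rule exI[of _ "[a,b]"]) auto

lemma wd3: "{a,b} \<in> E \<Longrightarrow> {b,c} \<in> E \<Longrightarrow> 2 \<le> r \<Longrightarrow> within_dist E r a c"
  unfolding within_dist_def by (rule exI[of _ "[a,b,c]"]) (auto simp: less_Suc_eq)

lemma wd4: "{a,b} \<in> E \<Longrightarrow> {b,c} \<in> E \<Longrightarrow> {c,d} \<in> E \<Longrightarrow> 3 \<le> r \<Longrightarrow> within_dist E r a d"
  unfolding within_dist_def by (rule exI[of _ "[a,b,c,d]"]) (auto simp: less_Suc_eq)

lemma e_ll: "i < n \<Longrightarrow> k < n \<Longrightarrow> i \<noteq> k \<Longrightarrow> {Inl i, Inl k} \<in> sun_E n"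
  unfolding sun_E_def by blast

lemma e_lr: "j < n \<Longrightarrow> {Inl j, Inr j} \<in> sun_E n"
  unfolding sun_E_def by blast

lemma e_rl: "j < n \<Longrightarrow> {Inr j, Inl j} \<in> sun_E n"
  using e_lr by (simp add: insert_commute)

lemma sun_wd:
  assumes "u \<in> sun_V n" "v \<in> sun_V n" "u \<noteq> v" "r \<ge> 3"
  shows "within_dist (sun_E n) r u v"
proof -
  have r1: "1 \<le> r" and r2: "2 \<le> r" and r3: "3 \<le> r" using assms(4) by simp_all
  show ?thesis
  proof (cases u)
    case (Inl i)
    hence i: "i < n" using assms(1) unfolding sun_V_def by auto
    show ?thesis
    proof (cases v)
      case (Inl k)
      hence k: "k < n" using assms(2) unfolding sun_V_def by auto
      have ik: "i \<noteq> k" using Inl \<open>u = Inl i\<close> assms(3) by auto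
      show ?thesis unfolding \<open>u = Inl i\<close> \<open>v = Inl k\<close>
        by (rule wd2[OF e_ll[OF i k ik] r1])
    next
      case (Inr j)
      hence j: "j < n" using assms(2) unfolding sun_V_def by auto
      show ?thesis
      proof (cases "i = j")
        case True
        show ?thesis unfolding \<open>u = Inl i\<close> \<open>v = Inr j\<close> True
          by (rule wd2[OF e_lr[OF j] r1])
      next
        case False
        show ?thesis unfolding \<open>u = Inl i\<close> \<open>v = Inr j\<close>
          by (rule wd3[OF e_ll[OF i j False] e_lr[OF j] r2])
      qed
    qed
  next
    case (Inr j)
    hence j: "j < n" using assms(1) unfolding sun_V_def by auto
    show ?thesis
    proof (cases v)
      case (Inl i)
      hence i: "i < n" using assms(2) unfolding sun_V_def by auto
      show ?thesis
      proof (cases "j = i")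
        case True
        show ?thesis unfolding \<open>u = Inr j\<close> \<open>v = Inl i\<close> True[symmetric]
          by (rule wd2[OF e_rl[OF j] r1])
      next
        case False
        show ?thesis unfolding \<open>u = Inr j\<close> \<open>v = Inl i\<close>
          by (rule wd3[OF e_rl[OF j] e_ll[OF j i False] r2])
      qed
    next
      case (Inr k)
      hence k: "k < n" using assms(2) unfolding sun_V_def by auto
      have jk: "j \<noteq> k" using Inr \<open>u = Inr j\<close> assms(3) by auto
      show ?thesis unfolding \<open>u = Inr j\<close> \<open>v = Inr k\<close>
        by (rule wd4[OF e_rl[OF j] e_ll[OF j k jk] e_lr[OF k] r3])
    qed
  qed
qed

lemma sun_power:
  assumes "r \<ge> 3"
  shows "graph_power (sun_V n) (sun_E n) r = K (sun_V n)"
proof (rule set_eqI, rule iffI)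
  fix e assume "e \<in> graph_power (sun_V n) (sun_E n) r"
  then obtain u v where "e = {u,v}" "u \<in> sun_V n" "v \<in> sun_V n" "u \<noteq> v"
    unfolding graph_power_def by blast
  thus "e \<in> K (sun_V n)" unfolding K_def by blast
next
  fix e assume "e \<in> K (sun_V n)"
  then obtain u v where "e = {u,v}" "u \<in> sun_V n" "v \<in> sun_V n" "u \<noteq> v"
    unfolding K_def by blast
  moreover have "within_dist (sun_E n) r u v" using sun_wd calculation(2-4) assms by blast
  ultimately show "e \<in> graph_power (sun_V n) (sun_E n) r" unfolding graph_power_def by blast
qed

lemma sun_card: "card (sun_V n) = 2 * n"
proof -
  have "card (Inl ` {..<n} :: (nat+nat) set) = n" by (simp add: card_image)
  moreover have "card (Inr ` {..<n} :: (nat+nat) set) = n" by (simp add: card_image)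
  moreover have "Inl ` {..<n} \<inter> (Inr ` {..<n} :: (nat+nat) set) = {}" by auto
  ultimately show ?thesis unfolding sun_V_def by (simp add: card_Un_disjoint)
qed

theorem mainTheorem6:
  fixes n r :: nat
  assumes "n \<ge> 4" and "r \<ge> 3"
  shows "sparing_number (sun_V n) (graph_power (sun_V n) (sun_E n) r) = (n - 1) * (2 * n - 1)"
proof -
  have fin: "finite (sun_V n)" unfolding sun_V_def by simp
  have "sparing_number (sun_V n) (graph_power (sun_V n) (sun_E n) r) = (2*n - 1) choose 2"
    using complete_sparing[OF fin] sun_power[OF assms(2)] sun_card assms(1) by simp
  also have "\<dots> = (n - 1) * (2 * n - 1)"
  proof -
    obtain m where m: "n = Suc m" using assms(1) by (cases n) auto
    have "(2*n - 1) choose 2 = (2*m+1) * (2*m) div 2" unfolding choose_two m by simp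
    also have "\<dots> = (2*m+1)*m" by simp
    finally show ?thesis using m by simp
  qed
  finally show ?thesis .
qed

end
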